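(* Let $\mathcal{H}$ be a separable complex Hilbert space, let $T \in B(\mathcal{H})$, and write $T = A + iB$ with $A = A^*$ and $B = B^*$. If $\operatorname{rank}(A) = 1$ or $\operatorname{rank}(B) = 1$, then $T$ is a complex symmetric operator.
   Context: A conjugation on $\mathcal{H}$ is a conjugate-linear map $C:\mathcal{H}\to\mathcal{H}$ that is isometric and involutive ($C^2=I$). An operator $T$ is complex symmetric if $T = CT^*C$ for some conjugation $C$. *)

theory Defs
  imports "HOL-Analysis.Analysis"
begin

class cvector_space = ab_group_add +
  fixes scaleC :: "complex \<Rightarrow> 'a \<Rightarrow> 'a"
  assumes scaleC_add_right: "scaleC a (x + y) = scaleC a x + scaleC a y"
    and scaleC_add_left: "scaleC (a + b) x = scaleC a x + scaleC b x"
    and scaleC_scaleC: "scaleC a (scaleC b x) = scaleC (a * b) x"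
    and scaleC_one: "scaleC 1 x = x"

class cinner_space = cvector_space + real_normed_vector +
  fixes cinner :: "'a \<Rightarrow> 'a \<Rightarrow> complex"
  assumes scaleR_scaleC: "scaleR r x = scaleC (complex_of_real r) x"
    and cinner_conj: "cinner x y = cnj (cinner y x)"
    and cinner_add_right: "cinner x (y + z) = cinner x y + cinner x z"
    and cinner_scaleC_right: "cinner x (scaleC c y) = c * cinner x y"
    and cinner_self_norm: "cinner x x = complex_of_real ((norm x)\<^sup>2)"

class chilbert_space = cinner_space + complete_space

definition clinear :: "('a::cvector_space \<Rightarrow> 'b::cvector_space) \<Rightarrow> bool" where
  "clinear T \<longleftrightarrow> (\<forall>x y. T (x + y) = T x + T y) \<and> (\<forall>c x. T (scaleC c x) = scaleC c (T x))"

definition bounded_clinear :: "('a::cinner_space \<Rightarrow> 'b::cinner_space) \<Rightarrow> bool" where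
  "bounded_clinear T \<longleftrightarrow> clinear T \<and> (\<exists>K. \<forall>x. norm (T x) \<le> norm x * K)"

definition is_adjoint :: "('a::cinner_space \<Rightarrow> 'a) \<Rightarrow> ('a \<Rightarrow> 'a) \<Rightarrow> bool" where
  "is_adjoint T S \<longleftrightarrow> (\<forall>x y. cinner (T x) y = cinner x (S y))"

definition selfadjoint :: "('a::cinner_space \<Rightarrow> 'a) \<Rightarrow> bool" where
  "selfadjoint A \<longleftrightarrow> is_adjoint A A"

definition cspan :: "'a::cvector_space set \<Rightarrow> 'a set" where
  "cspan S = {(\<Sum>v\<in>F. scaleC (c v) v) | F c. finite F \<and> F \<subseteq> S}"

text \<open>Operators of infinite rank are assigned rank 0 here; this does
  not affect statements of the form \<open>crank T = 1\<close>.\<close>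
definition crank :: "('a::cvector_space \<Rightarrow> 'b::cvector_space) \<Rightarrow> nat" where
  "crank T = (if \<exists>F. finite F \<and> cspan F = range T
              then (LEAST n. \<exists>F. finite F \<and> card F = n \<and> cspan F = range T)
              else 0)"

definition conjugation :: "('a::cinner_space \<Rightarrow> 'a) \<Rightarrow> bool" where
  "conjugation C \<longleftrightarrow>
     (\<forall>x y. C (x + y) = C x + C y) \<and> (\<forall>c x. C (scaleC c x) = scaleC (cnj c) (C x)) \<and>
     (\<forall>x. norm (C x) = norm x) \<and> (\<forall>x. C (C x) = x)"

definition complex_symmetric :: "('a::cinner_space \<Rightarrow> 'a) \<Rightarrow> bool" where
  "complex_symmetric T \<longleftrightarrow>
     (\<exists>C S. conjugation C \<and> is_adjoint T S \<and> (\<forall>x. T x = C (S (C x))))"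

definition separable_space :: "'a::topological_space itself \<Rightarrow> bool" where
  "separable_space _ \<longleftrightarrow> (\<exists>D::'a set. countable D \<and> closure D = UNIV)"

end

theory Submission
  imports Defs
begin

lemma scaleC_zero_right[simp]: "scaleC c (0::'a::cvector_space) = 0"
proof -
  have "scaleC c (0::'a) = scaleC c (0 + 0)" by simp
  also have "\<dots> = scaleC c 0 + scaleC c 0" by (rule scaleC_add_right)
  finally have "scaleC c (0::'a) = scaleC c 0 + scaleC c 0" .
  then show ?thesis by (simp only: add_cancel_right_right)
qed
lemma scaleC_zero_left[simp]: "scaleC 0 (x::'a::cvector_space) = 0"
proof -
  have "scaleC 0 x = scaleC (0 + 0) x" by simp
  also have "\<dots> = scaleC 0 x + scaleC 0 x" by (rule scaleC_add_left)
  finally have "scaleC 0 x = scaleC 0 x + scaleC 0 x" .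
  then show ?thesis by (simp only: add_cancel_right_right)
qed
lemma scaleC_minus_right: "scaleC c (- x::'a::cvector_space) = - scaleC c x"
proof -
  have "scaleC c (- x) + scaleC c x = scaleC c (-x + x)" by (rule scaleC_add_right[symmetric])
  then have "scaleC c (- x) + scaleC c x = 0" by simp
  then show ?thesis by (simp add: eq_neg_iff_add_eq_0)
qed
lemma scaleC_diff_right: "scaleC c (x - y::'a::cvector_space) = scaleC c x - scaleC c y"
  unfolding diff_conv_add_uminus by (simp only: scaleC_add_right scaleC_minus_right)
lemma scaleC_minus_left: "scaleC (-c) (x::'a::cvector_space) = - scaleC c x"
proof -
  have "scaleC (-c) x + scaleC c x = scaleC (-c + c) x" by (rule scaleC_add_left[symmetric])
  then have "scaleC (-c) x + scaleC c x = 0" by simp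
  then show ?thesis by (simp add: eq_neg_iff_add_eq_0)
qed

lemma scaleC_of_real: "scaleC (complex_of_real r) (x::'a::cinner_space) = r *\<^sub>R x"
  by (simp add: scaleR_scaleC)

lemma scaleC_decomp: "scaleC c (x::'a::cinner_space) = Re c *\<^sub>R x + Im c *\<^sub>R scaleC \<i> x"
proof -
  have "c = complex_of_real (Re c) + complex_of_real (Im c) * \<i>" by (simp add: complex_eq_iff)
  then have "scaleC c x = scaleC (complex_of_real (Re c) + complex_of_real (Im c) * \<i>) x" by simp
  also have "\<dots> = Re c *\<^sub>R x + Im c *\<^sub>R scaleC \<i> x"
    by (simp add: scaleC_add_left scaleC_scaleC[symmetric] scaleR_scaleC)
  finally show ?thesis .
qed

lemma scaleC_ii: "scaleC \<i> (scaleC \<i> x) = - (x::'a::cinner_space)"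
proof -
  have "scaleC \<i> (scaleC \<i> x) = scaleC (- 1) x" by (simp add: scaleC_scaleC)
  then show ?thesis by (simp add: scaleC_minus_left scaleC_one)
qed

lemma scaleC_i_scaleR: "scaleC \<i> (r *\<^sub>R x) = r *\<^sub>R scaleC \<i> (x::'a::cinner_space)"
  by (simp add: scaleR_scaleC scaleC_scaleC mult.commute)

lemma scaleC_i_add: "scaleC \<i> (x + y) = scaleC \<i> x + scaleC \<i> (y::'a::cinner_space)"
  by (simp add: scaleC_add_right)
lemma scaleC_i_minus: "scaleC \<i> (- x) = - scaleC \<i> (x::'a::cinner_space)"
  by (simp add: scaleC_minus_right)
lemma scaleC_i_diff: "scaleC \<i> (x - y) = scaleC \<i> x - scaleC \<i> (y::'a::cinner_space)"
  by (simp add: scaleC_diff_right)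

lemma cinner_scaleC_left: "cinner (scaleC c x) (y::'a::cinner_space) = cnj c * cinner x y"
proof -
  have "cinner (scaleC c x) y = cnj (cinner y (scaleC c x))" by (rule cinner_conj)
  also have "\<dots> = cnj c * cnj (cinner y x)" by (simp add: cinner_scaleC_right)
  also have "cnj (cinner y x) = cinner x y" by (rule cinner_conj[symmetric])
  finally show ?thesis .
qed
lemma cinner_add_left: "cinner (x + y) (z::'a::cinner_space) = cinner x z + cinner y z"
proof -
  have "cinner (x + y) z = cnj (cinner z (x+y))" by (rule cinner_conj)
  also have "\<dots> = cnj (cinner z x) + cnj (cinner z y)" by (simp add: cinner_add_right)
  finally show ?thesis by (simp flip: cinner_conj)
qed
lemma cinner_zero_right[simp]: "cinner x (0::'a::cinner_space) = 0"
proof -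
  have "cinner x (0::'a) = cinner x (0 + 0)" by simp
  also have "\<dots> = cinner x 0 + cinner x 0" by (rule cinner_add_right)
  finally have "cinner x (0::'a) = cinner x 0 + cinner x 0" .
  then show ?thesis by (simp only: add_cancel_right_right)
qed
lemma cinner_zero_left[simp]: "cinner (0::'a::cinner_space) x = 0"
proof -
  have "cinner (0::'a) x = cinner (0 + 0) x" by simp
  also have "\<dots> = cinner 0 x + cinner 0 x" by (rule cinner_add_left)
  finally have "cinner (0::'a) x = cinner 0 x + cinner 0 x" .
  then show ?thesis by (simp only: add_cancel_right_right)
qed
lemma cinner_minus_right: "cinner x (- y::'a::cinner_space) = - cinner x y"
proof -
  have "cinner x (- y) + cinner x y = cinner x (-y + y)" by (rule cinner_add_right[symmetric])
  then have "cinner x (- y) + cinner x y = 0" by simp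
  then show ?thesis by (simp add: eq_neg_iff_add_eq_0)
qed
lemma cinner_minus_left: "cinner (- x) (y::'a::cinner_space) = - cinner x y"
proof -
  have "cinner (- x) y + cinner x y = cinner (-x + x) y" by (rule cinner_add_left[symmetric])
  then have "cinner (- x) y + cinner x y = 0" by simp
  then show ?thesis by (simp add: eq_neg_iff_add_eq_0)
qed
lemma cinner_diff_right: "cinner x (y - z::'a::cinner_space) = cinner x y - cinner x z"
  unfolding diff_conv_add_uminus by (simp only: cinner_add_right cinner_minus_right)
lemma cinner_diff_left: "cinner (x - y) (z::'a::cinner_space) = cinner x z - cinner y z"
  unfolding diff_conv_add_uminus by (simp only: cinner_add_left cinner_minus_left)
lemma cinner_scaleR_right: "cinner x (r *\<^sub>R y::'a::cinner_space) = complex_of_real r * cinner x y"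
  by (simp add: scaleR_scaleC cinner_scaleC_right)
lemma cinner_scaleR_left: "cinner (r *\<^sub>R x) (y::'a::cinner_space) = complex_of_real r * cinner x y"
  by (simp add: scaleR_scaleC cinner_scaleC_left)

lemma Re_cinner_self: "Re (cinner x (x::'a::cinner_space)) = (norm x)\<^sup>2"
  by (simp add: cinner_self_norm)
lemma Im_cinner_self: "Im (cinner x (x::'a::cinner_space)) = 0"
  by (simp add: cinner_self_norm)
lemma cinner_self_eq_0: "cinner x x = 0 \<longleftrightarrow> (x::'a::cinner_space) = 0"
  by (simp add: cinner_self_norm)

lemma norm_add_sq: "(norm (x + y))\<^sup>2 = (norm x)\<^sup>2 + (norm y)\<^sup>2 + 2 * Re (cinner x (y::'a::cinner_space))"
proof -
  have "Re (cinner (x+y) (x+y)) = Re (cinner x x) + Re (cinner y y) + Re (cinner x y) + Re (cinner y x)"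
    by (simp add: cinner_add_left cinner_add_right)
  moreover have "Re (cinner y x) = Re (cinner x y)" by (subst cinner_conj) simp
  ultimately show ?thesis by (simp add: Re_cinner_self)
qed

lemma norm_diff_sq: "(norm (x - y))\<^sup>2 = (norm x)\<^sup>2 + (norm y)\<^sup>2 - 2 * Re (cinner x (y::'a::cinner_space))"
  using norm_add_sq[of x "-y"] by (simp add: cinner_minus_right)

lemma norm_scaleC_i: "norm (scaleC \<i> x) = norm (x::'a::cinner_space)"
proof -
  have "cinner (scaleC \<i> x) (scaleC \<i> x) = cinner x x"
    by (simp add: cinner_scaleC_left cinner_scaleC_right)
  then have "(norm (scaleC \<i> x))\<^sup>2 = (norm x)\<^sup>2" by (simp add: cinner_self_norm flip: of_real_power)
  then show ?thesis by (simp add: power2_eq_iff_nonneg)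
qed

lemma norm_scaleC: "norm (scaleC c x) = cmod c * norm (x::'a::cinner_space)"
proof -
  have cc: "cnj c * c = (complex_of_real (cmod c))\<^sup>2" by (simp add: mult.commute flip: complex_norm_square)
  have "complex_of_real ((norm (scaleC c x))\<^sup>2) = cinner (scaleC c x) (scaleC c x)" by (simp add: cinner_self_norm)
  also have "\<dots> = (cnj c * c) * cinner x x"
    by (simp add: cinner_scaleC_left cinner_scaleC_right)
  also have "\<dots> = complex_of_real ((cmod c * norm x)\<^sup>2)"
    unfolding cc cinner_self_norm by (simp add: power_mult_distrib)
  finally have "(norm (scaleC c x))\<^sup>2 = (cmod c * norm x)\<^sup>2" by (simp only: of_real_eq_iff)
  then show ?thesis by (simp add: power2_eq_iff_nonneg)
qed

lemma bounded_linear_scaleC: "bounded_linear (scaleC c :: 'a::cinner_space \<Rightarrow> 'a)"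
  by (rule bounded_linear_intro[where K="cmod c"])
     (auto simp: scaleC_add_right scaleR_scaleC scaleC_scaleC mult.commute norm_scaleC)

lemma continuous_scaleC[continuous_intros]:
  "continuous_on S f \<Longrightarrow> continuous_on S (\<lambda>x. scaleC c (f x::'a::cinner_space))"
  using bounded_linear.continuous_on[OF bounded_linear_scaleC] by blast

lemma bclinear_linear: "bounded_clinear T \<Longrightarrow> bounded_linear (T::'a::cinner_space \<Rightarrow> 'b::cinner_space)"
proof -
  assume a: "bounded_clinear T"
  then obtain K where K: "\<And>x. norm (T x) \<le> norm x * K" and l: "clinear T"
    unfolding bounded_clinear_def by blast
  show ?thesis
    by (rule bounded_linear_intro[where K=K]) (use l K in \<open>auto simp: clinear_def scaleR_scaleC\<close>)
qed


lemma subspace_closure_real: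
  fixes V :: "'a::real_normed_vector set"
  assumes "subspace V" shows "subspace (closure V)"
  unfolding subspace_def
proof (intro conjI ballI allI)
  show "0 \<in> closure V" using assms closure_subset subspace_0 by blast
next
  fix x y assume "x \<in> closure V" "y \<in> closure V"
  then obtain f g where f: "\<And>n. f n \<in> V" "f \<longlonglongrightarrow> x" and g: "\<And>n. g n \<in> V" "g \<longlonglongrightarrow> y"
    unfolding closure_sequential by blast
  have "\<forall>n. f n + g n \<in> V" using f g assms subspace_add by blast
  moreover have "(\<lambda>n. f n + g n) \<longlonglongrightarrow> x + y" using f g by (intro tendsto_intros)
  ultimately show "x + y \<in> closure V" unfolding closure_sequential by (intro exI[where x="\<lambda>n. f n + g n"]) blast
next
  fix c :: real and x assume "x \<in> closure V"
  then obtain f where f: "\<And>n. f n \<in> V" "f \<longlonglongrightarrow> x"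
    unfolding closure_sequential by blast
  have "\<forall>n. c *\<^sub>R f n \<in> V" using f assms subspace_scale by blast
  moreover have "(\<lambda>n. c *\<^sub>R f n) \<longlonglongrightarrow> c *\<^sub>R x" using f by (intro tendsto_intros)
  ultimately show "c *\<^sub>R x \<in> closure V" unfolding closure_sequential by (intro exI[where x="\<lambda>n. c *\<^sub>R f n"]) blast
qed

lemma real_quad_zero:
  fixes a b :: real
  assumes "b \<ge> 0" and h: "\<And>t. 2 * t * a \<le> t\<^sup>2 * b"
  shows "a = 0"
proof (rule ccontr)
  assume "a \<noteq> 0"
  define t where "t = a / (b + 1)"
  have "2 * t * a \<le> t\<^sup>2 * b" by (rule h)
  moreover have "2 * t * a - t\<^sup>2 * b = (a * a) * (b + 2) / ((b + 1) * (b + 1))"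
  proof -
    have hb: "b + 1 \<noteq> 0" using assms(1) by simp
    show ?thesis unfolding t_def using hb by (simp add: power2_eq_square divide_simps; algebra)
  qed
  moreover have "(a * a) * (b + 2) / ((b + 1) * (b + 1)) > 0"
  proof -
    have aa: "a * a > 0" using \<open>a \<noteq> 0\<close> not_real_square_gt_zero by blast
    have "(a * a) * (b + 2) > 0" by (rule mult_pos_pos[OF aa]) (use assms(1) in simp)
    moreover have "(b + 1) * (b + 1) > 0" using assms(1) by (simp add: add_pos_nonneg)
    ultimately show ?thesis by simp
  qed
  ultimately show False by linarith
qed

lemma exists_orth:
  fixes V :: "'a::chilbert_space set"
  assumes sub: "subspace V" and iV: "\<And>v. v \<in> V \<Longrightarrow> scaleC \<i> v \<in> V"
    and nd: "closure V \<noteq> UNIV"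
  shows "\<exists>w. w \<noteq> 0 \<and> (\<forall>v\<in>V. cinner v w = 0)"
proof -
  define M where "M = closure V"
  have subM: "subspace M" unfolding M_def by (rule subspace_closure_real[OF sub])
  have clM: "closed M" unfolding M_def by simp
  have VM: "V \<subseteq> M" unfolding M_def by (rule closure_subset)
  obtain x where xM: "x \<notin> M" using nd M_def by blast
  have Mne: "M \<noteq> {}" using subM subspace_0 by blast
  define d where "d = infdist x M"
  have d0: "0 \<le> d" unfolding d_def by (rule infdist_nonneg)
  have dle: "d \<le> dist x y" if "y \<in> M" for y unfolding d_def using that by (rule infdist_le)
  have "\<exists>m\<in>M. (dist x m)\<^sup>2 < d\<^sup>2 + inverse (real (Suc n))" for n
  proof -
    define b where "b = d\<^sup>2 + inverse (real (Suc n))"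
    have b0: "b > d\<^sup>2" unfolding b_def by simp
    have "d < sqrt b" by (rule real_less_rsqrt) (use b0 in simp)
    then have "Inf (dist x ` M) < sqrt b" using Mne by (simp add: d_def infdist_notempty)
    then obtain m where m: "m \<in> M" "dist x m < sqrt b"
      using cInf_lessD[of "dist x ` M" "sqrt b"] Mne by auto
    have "(dist x m)\<^sup>2 < (sqrt b)\<^sup>2" by (rule power_strict_mono) (use m in auto)
    also have "(sqrt b)\<^sup>2 = b" using b0 by (simp add: order.strict_implies_order[OF le_less_trans[OF zero_le_power2 b0]])
    finally show ?thesis using m unfolding b_def by blast
  qed
  then have "\<forall>n. \<exists>mm. mm \<in> M \<and> (dist x mm)\<^sup>2 < d\<^sup>2 + inverse (real (Suc n))" by blast
  then obtain m where mm: "\<forall>n. m n \<in> M \<and> (dist x (m n))\<^sup>2 < d\<^sup>2 + inverse (real (Suc n))"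
    using choice[of "\<lambda>n mm. mm \<in> M \<and> (dist x mm)\<^sup>2 < d\<^sup>2 + inverse (real (Suc n))"] by blast
  have mM: "\<And>n. m n \<in> M" and mb: "\<And>n. (dist x (m n))\<^sup>2 < d\<^sup>2 + inverse (real (Suc n))"
    using mm by auto
  have para: "(norm (a - b))\<^sup>2 + (norm (a + b))\<^sup>2 = 2 * (norm a)\<^sup>2 + 2 * (norm b)\<^sup>2" for a b :: 'a
    using norm_add_sq[of a b] norm_diff_sq[of a b] by linarith
  have mdist: "(dist (m n) (m k))\<^sup>2 \<le> 2 * inverse (real (Suc n)) + 2 * inverse (real (Suc k))" for n k
  proof -
    define a where "a = x - m n"
    define b where "b = x - m k"
    define mid where "mid = (1/2) *\<^sub>R (m n + m k)"
    have midM: "mid \<in> M" unfolding mid_def using subM mM by (simp add: subspace_add subspace_scale)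
    have "a + b = 2 *\<^sub>R (x - mid)" unfolding a_def b_def mid_def by (simp add: algebra_simps scaleR_2)
    then have "norm (a + b) = 2 * dist x mid" by (simp add: dist_norm)
    moreover have "d \<le> dist x mid" using dle midM by blast
    ultimately have "(norm (a + b))\<^sup>2 \<ge> (2 * d)\<^sup>2" using d0 by (simp add: power_mono)
    moreover have "a - b = m k - m n" unfolding a_def b_def by simp
    moreover have "norm a = dist x (m n)" "norm b = dist x (m k)" unfolding a_def b_def by (simp_all add: dist_norm)
    ultimately show ?thesis using para[of a b] mb[of n] mb[of k]
      by (simp add: dist_norm norm_minus_commute power_mult_distrib)
  qed
  have "Cauchy m"
  proof (rule metric_CauchyI)
    fix e :: real assume e: "e > 0"
    obtain N :: nat where N: "4 / e\<^sup>2 < real N" using reals_Archimedean2 by blast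
    have "dist (m a) (m b) < e" if "a \<ge> N" "b \<ge> N" for a b
    proof -
      have "inverse (real (Suc a)) \<le> inverse (real (Suc N))" "inverse (real (Suc b)) \<le> inverse (real (Suc N))"
        using that by (simp_all add: le_imp_inverse_le)
      then have "(dist (m a) (m b))\<^sup>2 \<le> 4 * inverse (real (Suc N))" using mdist[of a b] by linarith
      also have "4 * inverse (real (Suc N)) < e\<^sup>2"
      proof -
        have e2: "e\<^sup>2 > 0" using e by simp
        have "4 < real N * e\<^sup>2" using N e2 by (simp only: pos_divide_less_eq)
        also have "\<dots> \<le> real (Suc N) * e\<^sup>2" using e2 by (intro mult_right_mono) auto
        finally have "4 < real (Suc N) * e\<^sup>2" .
        then have "4 / real (Suc N) < e\<^sup>2" by (simp only: pos_divide_less_eq of_nat_0_less_iff zero_less_Suc mult.commute)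
        then show ?thesis by (simp add: divide_inverse)
      qed
      finally show ?thesis by (rule power2_less_imp_less) (use e in simp)
    qed
    then show "\<exists>M. \<forall>a\<ge>M. \<forall>b\<ge>M. dist (m a) (m b) < e" by blast
  qed
  then obtain m0 where lim: "m \<longlonglongrightarrow> m0" using Cauchy_convergent_iff convergent_def by blast
  have m0M: "m0 \<in> M" using closed_sequentially[OF clM mM lim] .
  have "(dist x m0)\<^sup>2 \<le> d\<^sup>2"
  proof (rule LIMSEQ_le)
    show "(\<lambda>n. (dist x (m n))\<^sup>2) \<longlonglongrightarrow> (dist x m0)\<^sup>2" using lim by (intro tendsto_intros)
    show "(\<lambda>n. d\<^sup>2 + inverse (real (Suc n))) \<longlonglongrightarrow> d\<^sup>2"
      using tendsto_add[OF tendsto_const LIMSEQ_inverse_real_of_nat, of "d\<^sup>2"] by simp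
    show "\<exists>N. \<forall>n\<ge>N. (dist x (m n))\<^sup>2 \<le> d\<^sup>2 + inverse (real (Suc n))" using mb less_imp_le by blast
  qed
  define w where "w = x - m0"
  have w0: "w \<noteq> 0" using xM m0M unfolding w_def by auto
  have wle: "(norm w)\<^sup>2 \<le> d\<^sup>2" using \<open>(dist x m0)\<^sup>2 \<le> d\<^sup>2\<close> by (simp add: w_def dist_norm)
  have re0: "Re (cinner w v) = 0" if vV: "v \<in> V" for v
  proof (rule real_quad_zero[where b="(norm v)\<^sup>2"])
    show "0 \<le> (norm v)\<^sup>2" by simp
    fix t :: real
    have "m0 + t *\<^sub>R v \<in> M" using subM m0M VM vV by (simp add: subspace_add subspace_scale subsetD)
    then have "d \<le> norm (w - t *\<^sub>R v)" using dle[of "m0 + t *\<^sub>R v"] by (simp add: w_def dist_norm algebra_simps)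
    then have "d\<^sup>2 \<le> (norm (w - t *\<^sub>R v))\<^sup>2" using d0 by (simp add: power_mono)
    also have "\<dots> = (norm w)\<^sup>2 + t\<^sup>2 * (norm v)\<^sup>2 - 2 * (t * Re (cinner w v))"
      by (simp add: norm_diff_sq cinner_scaleR_right power_mult_distrib)
    finally show "2 * t * Re (cinner w v) \<le> t\<^sup>2 * (norm v)\<^sup>2" using wle by linarith
  qed
  have "cinner v w = 0" if vV: "v \<in> V" for v
  proof -
    have a: "Re (cinner w v) = 0" by (rule re0[OF vV])
    have "Re (cinner w (scaleC \<i> v)) = 0" by (rule re0[OF iV[OF vV]])
    then have b: "Im (cinner w v) = 0" by (simp add: cinner_scaleC_right)
    have "cinner w v = 0" using a b by (simp add: complex_eq_iff)
    then show ?thesis by (subst cinner_conj) simp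
  qed
  then show ?thesis using w0 by blast
qed


lemma bcl_add: "bounded_clinear B \<Longrightarrow> B (x + y) = B x + B y"
  unfolding bounded_clinear_def clinear_def by blast
lemma bcl_scaleC: "bounded_clinear B \<Longrightarrow> B (scaleC c x) = scaleC c (B x)"
  unfolding bounded_clinear_def clinear_def by blast
lemma bcl_scaleR: "bounded_clinear B \<Longrightarrow> B (r *\<^sub>R x) = r *\<^sub>R B (x::'a::cinner_space)"
  by (simp add: scaleR_scaleC bcl_scaleC)
lemma bcl_0: "bounded_clinear B \<Longrightarrow> B (0::'a::cinner_space) = (0::'b::cinner_space)"
  using bcl_scaleR[of B 0 0] by simp
lemma bcl_cont: "bounded_clinear B \<Longrightarrow> continuous_on S (B::'a::cinner_space \<Rightarrow> 'b::cinner_space)"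
  by (rule linear_continuous_on[OF bclinear_linear])

lemma pow_adj:
  assumes "selfadjoint B"
  shows "cinner ((B^^n) x) y = cinner x ((B^^n) y)"
proof (induction n arbitrary: x y)
  case 0 then show ?case by simp
next
  case (Suc n)
  have "cinner ((B^^Suc n) x) y = cinner (B ((B^^n) x)) y" by simp
  also have "\<dots> = cinner ((B^^n) x) (B y)" using assms unfolding selfadjoint_def is_adjoint_def by blast
  also have "\<dots> = cinner x ((B^^n) (B y))" by (rule Suc)
  also have "(B^^n) (B y) = (B^^Suc n) y" by (simp add: funpow_swap1)
  finally show ?case .
qed

lemma orb_real:
  assumes "selfadjoint B"
  shows "Im (cinner ((B^^j) x) ((B^^k) x)) = 0"
proof -
  define z where "z = cinner x ((B^^(j+k)) x)"
  have "cinner ((B^^j) x) ((B^^k) x) = cinner x ((B^^j) ((B^^k) x))" by (rule pow_adj[OF assms])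
  also have "(B^^j) ((B^^k) x) = (B^^(j+k)) x" by (simp add: funpow_add)
  finally have 1: "cinner ((B^^j) x) ((B^^k) x) = z" unfolding z_def .
  have "z = cnj (cinner ((B^^(j+k)) x) x)" unfolding z_def by (rule cinner_conj)
  also have "cinner ((B^^(j+k)) x) x = z" unfolding z_def by (rule pow_adj[OF assms])
  finally have "z = cnj z" .
  then have "Im z = 0" by (metis cnj.simps(2) neg_equal_zero)
  then show ?thesis using 1 by simp
qed

lemma span_real_inner:
  assumes "\<And>a b. a \<in> G \<Longrightarrow> b \<in> G \<Longrightarrow> Im (cinner a (b::'a::cinner_space)) = 0"
  shows "\<And>a b. a \<in> span G \<Longrightarrow> b \<in> span G \<Longrightarrow> Im (cinner a b) = 0"
proof -
  have sub1: "subspace {a. Im (cinner a b) = 0}" for b :: 'a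
    unfolding subspace_def by (simp add: cinner_add_left cinner_scaleR_left)
  have sub2: "subspace {b. Im (cinner a b) = 0}" for a :: 'a
    unfolding subspace_def by (simp add: cinner_add_right cinner_scaleR_right)
  have step1: "Im (cinner a b) = 0" if "a \<in> span G" "b \<in> G" for a b
  proof -
    have "G \<subseteq> {a. Im (cinner a b) = 0}" using assms that(2) by blast
    then have "span G \<subseteq> {a. Im (cinner a b) = 0}" by (rule span_minimal[OF _ sub1])
    then show ?thesis using that(1) by blast
  qed
  fix a b assume "a \<in> span G" "b \<in> span G"
  have "G \<subseteq> {b. Im (cinner a b) = 0}" using step1 \<open>a \<in> span G\<close> by blast
  then have "span G \<subseteq> {b. Im (cinner a b) = 0}" by (rule span_minimal[OF _ sub2])
  then show "Im (cinner a b) = 0" using \<open>b \<in> span G\<close> by blast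
qed

lemma span_invariant:
  assumes "bounded_clinear B" and "\<And>x. x \<in> G \<Longrightarrow> B x \<in> span G"
  shows "\<And>x. x \<in> span G \<Longrightarrow> B (x::'a::cinner_space) \<in> span G"
proof -
  have "subspace {x. B x \<in> span G}"
    unfolding subspace_def using assms(1)
    by (simp add: bcl_add bcl_scaleR bcl_0 span_add span_scale span_zero)
  moreover have "G \<subseteq> {x. B x \<in> span G}" using assms(2) by blast
  ultimately have "span G \<subseteq> {x. B x \<in> span G}" using span_minimal by blast
  then show "\<And>x. x \<in> span G \<Longrightarrow> B x \<in> span G" by blast
qed

lemma dense_eq:
  fixes f h :: "'a::topological_space \<Rightarrow> 'b::t2_space"
  assumes "continuous_on UNIV f" "continuous_on UNIV h" "closure V = UNIV" "\<And>x. x \<in> V \<Longrightarrow> f x = h x"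
  shows "f x = h x"
proof -
  have "closed {x. f x = h x}" by (rule closed_Collect_eq[OF assms(1,2)])
  moreover have "V \<subseteq> {x. f x = h x}" using assms(4) by blast
  ultimately have "closure V \<subseteq> {x. f x = h x}" by (rule closure_minimal[rotated])
  then show ?thesis using assms(3) by blast
qed


lemma exists_conj:
  fixes B :: "'a::chilbert_space \<Rightarrow> 'a"
  assumes bB: "bounded_clinear B" and sB: "selfadjoint B"
  shows "\<exists>C. conjugation C \<and> (\<forall>x. C (B x) = B (C x)) \<and> C e = e"
proof -
  define orb where "orb x = range (\<lambda>n. (B^^n) x)" for x
  have orbB: "B y \<in> orb x" if hy: "y \<in> orb x" for x y
  proof -
    obtain n where "y = (B^^n) x" using hy unfolding orb_def by blast
    then have "B y = (B^^Suc n) x" by simp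
    then show ?thesis unfolding orb_def by blast
  qed
  have orb0: "x \<in> orb x" for x unfolding orb_def by (metis funpow_0 rangeI)
  have orbR: "Im (cinner a b) = 0" if "a \<in> orb x" "b \<in> orb x" for a b x
    using that orb_real[OF sB] unfolding orb_def by blast
  define R0 where "R0 = span (orb e)"
  define Fam where "Fam = {R. subspace R \<and> R0 \<subseteq> R \<and> (\<forall>x\<in>R. B x \<in> R) \<and> (\<forall>x\<in>R. \<forall>y\<in>R. Im (cinner x y) = 0)}"
  have R0F: "R0 \<in> Fam"
  proof -
    have "\<forall>x\<in>R0. B x \<in> R0" unfolding R0_def
      using span_invariant[OF bB, of "orb e"] orbB span_base by blast
    moreover have "\<forall>x\<in>R0. \<forall>y\<in>R0. Im (cinner x y) = 0" unfolding R0_def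
      using span_real_inner[of "orb e"] orbR by blast
    ultimately show ?thesis unfolding Fam_def R0_def by simp
  qed
  have "\<forall>Ch\<in>chains Fam. \<exists>U\<in>Fam. \<forall>X\<in>Ch. X \<subseteq> U"
  proof
    fix Ch assume Ch: "Ch \<in> chains Fam"
    show "\<exists>U\<in>Fam. \<forall>X\<in>Ch. X \<subseteq> U"
    proof (cases "Ch = {}")
      case True then show ?thesis using R0F by blast
    next
      case False
      have CF: "Ch \<subseteq> Fam" using chainsD2[OF Ch] .
      have two: "\<exists>X\<in>Ch. x \<in> X \<and> y \<in> X" if "x \<in> \<Union>Ch" "y \<in> \<Union>Ch" for x y
      proof -
        from that obtain X Y where XY: "X \<in> Ch" "Y \<in> Ch" "x \<in> X" "y \<in> Y" by blast
        from chainsD[OF Ch XY(1,2)] show ?thesis using XY by blast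
      qed
      obtain X0 where X0: "X0 \<in> Ch" using False by blast
      have "subspace (\<Union>Ch)"
        unfolding subspace_def
      proof (intro conjI ballI allI)
        show "0 \<in> \<Union>Ch" using X0 CF unfolding Fam_def by (auto intro: subspace_0)
      next
        fix x y assume "x \<in> \<Union>Ch" "y \<in> \<Union>Ch"
        then obtain X where "X \<in> Ch" "x \<in> X" "y \<in> X" using two by blast
        then show "x + y \<in> \<Union>Ch" using CF unfolding Fam_def by (blast intro: subspace_add)
      next
        fix c :: real and x assume "x \<in> \<Union>Ch"
        then obtain X where "X \<in> Ch" "x \<in> X" by blast
        then show "c *\<^sub>R x \<in> \<Union>Ch" using CF unfolding Fam_def by (blast intro: subspace_scale)
      qed
      moreover have "R0 \<subseteq> \<Union>Ch" using X0 CF unfolding Fam_def by blast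
      moreover have "\<forall>x\<in>\<Union>Ch. B x \<in> \<Union>Ch" using CF unfolding Fam_def by blast
      moreover have "\<forall>x\<in>\<Union>Ch. \<forall>y\<in>\<Union>Ch. Im (cinner x y) = 0"
      proof (intro ballI)
        fix x y assume "x \<in> \<Union>Ch" "y \<in> \<Union>Ch"
        then obtain X where "X \<in> Ch" "x \<in> X" "y \<in> X" using two by blast
        then show "Im (cinner x y) = 0" using CF unfolding Fam_def by blast
      qed
      ultimately have "\<Union>Ch \<in> Fam" unfolding Fam_def by blast
      then show ?thesis by blast
    qed
  qed
  then have "\<exists>M\<in>Fam. \<forall>X\<in>Fam. M \<subseteq> X \<longrightarrow> X = M" by (rule Zorn_Lemma2)
  then obtain R where RF: "R \<in> Fam" and Rmax0: "\<forall>X\<in>Fam. R \<subseteq> X \<longrightarrow> X = R"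
    by (elim bexE) simp
  have Rmax: "\<And>X. X \<in> Fam \<Longrightarrow> R \<subseteq> X \<Longrightarrow> X = R" using Rmax0 by simp
  have subR: "subspace R" and R0R: "R0 \<subseteq> R" and invR: "\<And>x. x \<in> R \<Longrightarrow> B x \<in> R"
    and realR: "\<And>x y. x \<in> R \<Longrightarrow> y \<in> R \<Longrightarrow> Im (cinner x y) = 0"
    using RF unfolding Fam_def by blast+
  have eR: "e \<in> R" using R0R orb0 span_base unfolding R0_def by blast
  have powR: "(B^^n) r \<in> R" if "r \<in> R" for n r
    using that by (induction n) (auto intro: invR)
  define V where "V = {r + scaleC \<i> s | r s. r \<in> R \<and> s \<in> R}"
  have RV: "r \<in> V" if "r \<in> R" for r
  proof -
    have "r = r + scaleC \<i> 0" by simp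
    then show ?thesis unfolding V_def using that subspace_0[OF subR] by blast
  qed
  have subV: "subspace V"
    unfolding subspace_def
  proof (intro conjI ballI allI)
    show "0 \<in> V" using RV subspace_0[OF subR] by blast
  next
    fix x y assume "x \<in> V" "y \<in> V"
    then obtain r s r' s' where rs: "r \<in> R" "s \<in> R" "r' \<in> R" "s' \<in> R" "x = r + scaleC \<i> s" "y = r' + scaleC \<i> s'"
      unfolding V_def by blast
    have "x + y = (r + r') + scaleC \<i> (s + s')" using rs by (simp add: scaleC_i_add algebra_simps)
    moreover have "r + r' \<in> R" "s + s' \<in> R" using rs subR by (simp_all add: subspace_add)
    ultimately show "x + y \<in> V" unfolding V_def by blast
  next
    fix c :: real and x assume "x \<in> V"
    then obtain r s where rs: "r \<in> R" "s \<in> R" "x = r + scaleC \<i> s" unfolding V_def by blast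
    have "c *\<^sub>R x = c *\<^sub>R r + scaleC \<i> (c *\<^sub>R s)" using rs by (simp add: scaleC_i_scaleR scaleR_add_right)
    moreover have "c *\<^sub>R r \<in> R" "c *\<^sub>R s \<in> R" using rs subR by (simp_all add: subspace_scale)
    ultimately show "c *\<^sub>R x \<in> V" unfolding V_def by blast
  qed
  have iV: "scaleC \<i> v \<in> V" if "v \<in> V" for v
  proof -
    from that obtain r s where rs: "r \<in> R" "s \<in> R" "v = r + scaleC \<i> s" unfolding V_def by blast
    have "scaleC \<i> v = (- s) + scaleC \<i> r" using rs by (simp add: scaleC_i_add scaleC_ii)
    moreover have "- s \<in> R" using rs subR by (simp add: subspace_neg)
    ultimately show ?thesis using rs unfolding V_def by blast
  qed
  have dense: "closure V = UNIV"
  proof (rule ccontr)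
    assume "closure V \<noteq> UNIV"
    note eo = exists_orth[OF subV iV this]
    then have "\<exists>w. w \<noteq> 0 \<and> (\<forall>v\<in>V. cinner v w = 0)" .
    then obtain w where w0: "w \<noteq> 0" and wo0: "\<forall>v\<in>V. cinner v w = 0" by (elim exE conjE)
    have wo: "\<And>v. v \<in> V \<Longrightarrow> cinner v w = 0" using wo0 by simp
    define G where "G = R \<union> orb w"
    have genR: "Im (cinner a b) = 0" if hab: "a \<in> G" "b \<in> G" for a b
    proof -
      consider "a \<in> R" "b \<in> R" | "a \<in> R" "b \<in> orb w" | "a \<in> orb w" "b \<in> R" | "a \<in> orb w" "b \<in> orb w"
        using hab unfolding G_def by blast
      then show ?thesis
      proof cases
        case 1 then show ?thesis by (rule realR)
      next
        case 2
        then obtain n where b: "b = (B^^n) w" unfolding orb_def by blast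
        have "cinner a b = cinner ((B^^n) a) w" unfolding b by (rule pow_adj[OF sB, symmetric])
        also have "\<dots> = 0" by (rule wo[OF RV[OF powR[OF 2(1)]]])
        finally show ?thesis by simp
      next
        case 3
        then obtain n where a: "a = (B^^n) w" unfolding orb_def by blast
        have "cinner a b = cinner w ((B^^n) b)" unfolding a by (rule pow_adj[OF sB])
        also have "\<dots> = cnj (cinner ((B^^n) b) w)" by (rule cinner_conj)
        also have "cinner ((B^^n) b) w = 0" by (rule wo[OF RV[OF powR[OF 3(2)]]])
        finally show ?thesis by simp
      next
        case 4 then show ?thesis by (rule orbR)
      qed
    qed
    define R' where "R' = span G"
    have "R' \<in> Fam"
    proof -
      have gi: "B x \<in> span G" if "x \<in> G" for x
      proof -
        have "B x \<in> G" using that unfolding G_def using invR orbB by blast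
        then show "B x \<in> span G" by (rule span_base)
      qed
      have "\<forall>x\<in>R'. B x \<in> R'" unfolding R'_def
        using span_invariant[OF bB gi] by blast
      moreover have "\<forall>x\<in>R'. \<forall>y\<in>R'. Im (cinner x y) = 0" unfolding R'_def
        by (intro ballI span_real_inner[OF genR])
      moreover have "R0 \<subseteq> R'" using R0R span_superset[of G] unfolding R'_def G_def by blast
      moreover have "subspace R'" unfolding R'_def by (rule subspace_span)
      ultimately show ?thesis unfolding Fam_def by blast
    qed
    moreover have "R \<subseteq> R'" using span_superset[of G] unfolding R'_def G_def by blast
    ultimately have "R' = R" by (rule Rmax)
    moreover have "w \<in> R'" unfolding R'_def G_def by (rule span_base) (simp add: orb0)
    ultimately have "w \<in> R" by simp
    then have "w \<in> V" by (rule RV)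
    then have "cinner w w = 0" by (rule wo)
    then show False using w0 by (simp add: cinner_self_eq_0)
  qed
  have dec0: "p = 0 \<and> q = 0" if hp: "p \<in> R" "q \<in> R" "p + scaleC \<i> q = 0" for p q
  proof -
    have "cinner p (p + scaleC \<i> q) = 0" using hp(3) by simp
    then have "cinner p p + \<i> * cinner p q = 0" by (simp add: cinner_add_right cinner_scaleC_right)
    then have "Re (cinner p p + \<i> * cinner p q) = 0" by simp
    then have "Re (cinner p p) - Im (cinner p q) = 0" by simp
    moreover have "Im (cinner p q) = 0" by (rule realR[OF hp(1,2)])
    ultimately have "(norm p)\<^sup>2 = 0" by (simp add: Re_cinner_self)
    then have p0: "p = 0" by simp
    then have "scaleC \<i> q = 0" using hp(3) by simp
    then have "norm (scaleC \<i> q) = 0" by simp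
    then have "q = 0" by (simp add: norm_scaleC_i)
    with p0 show ?thesis by simp
  qed
  have dec_uniq: "r = r' \<and> s = s'" if h: "r \<in> R" "s \<in> R" "r' \<in> R" "s' \<in> R" "r + scaleC \<i> s = r' + scaleC \<i> s'" for r s r' s'
  proof -
    have "(r - r') + scaleC \<i> (s - s') = (r + scaleC \<i> s) - (r' + scaleC \<i> s')"
      by (simp add: scaleC_i_diff algebra_simps)
    also have "\<dots> = 0" using h(5) by simp
    finally have "(r - r') + scaleC \<i> (s - s') = 0" .
    moreover have "r - r' \<in> R" "s - s' \<in> R" using h subR by (simp_all add: subspace_diff)
    ultimately have "r - r' = 0 \<and> s - s' = 0" using dec0 by blast
    then show ?thesis by simp
  qed
  define C0 where "C0 v = (THE u. \<exists>r s. r \<in> R \<and> s \<in> R \<and> v = r + scaleC \<i> s \<and> u = r - scaleC \<i> s)" for v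
  have C0_eq: "C0 (r + scaleC \<i> s) = r - scaleC \<i> s" if h: "r \<in> R" "s \<in> R" for r s
    unfolding C0_def
  proof (rule the_equality)
    show "\<exists>r' s'. r' \<in> R \<and> s' \<in> R \<and> r + scaleC \<i> s = r' + scaleC \<i> s' \<and> r - scaleC \<i> s = r' - scaleC \<i> s'"
      using h by blast
  next
    fix u assume "\<exists>r' s'. r' \<in> R \<and> s' \<in> R \<and> r + scaleC \<i> s = r' + scaleC \<i> s' \<and> u = r' - scaleC \<i> s'"
    then obtain r' s' where h': "r' \<in> R" "s' \<in> R" "r + scaleC \<i> s = r' + scaleC \<i> s'" "u = r' - scaleC \<i> s'"
      by blast
    have "r = r' \<and> s = s'" by (rule dec_uniq[OF h h'(1,2,3)])
    then show "u = r - scaleC \<i> s" using h'(4) by simp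
  qed
  have Vdec: "\<exists>r s. r \<in> R \<and> s \<in> R \<and> v = r + scaleC \<i> s" if "v \<in> V" for v
    using that unfolding V_def by blast
  have normeq: "norm (r - scaleC \<i> s) = norm (r + scaleC \<i> s)" if h: "r \<in> R" "s \<in> R" for r s
  proof -
    have "Re (cinner r (scaleC \<i> s)) = 0" using realR[OF h] by (simp add: cinner_scaleC_right)
    then have "(norm (r - scaleC \<i> s))\<^sup>2 = (norm (r + scaleC \<i> s))\<^sup>2"
      by (simp add: norm_add_sq norm_diff_sq)
    then show ?thesis by (simp add: power2_eq_iff_nonneg)
  qed
  have C0_norm: "norm (C0 v) = norm v" if hv: "v \<in> V" for v
    using Vdec[OF hv] C0_eq normeq by auto
  have C0V: "C0 v \<in> V" if hv: "v \<in> V" for v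
  proof -
    obtain r s where h: "r \<in> R" "s \<in> R" "v = r + scaleC \<i> s" using Vdec[OF hv] by blast
    have "C0 v = r + scaleC \<i> (- s)" using h C0_eq by (simp add: scaleC_i_minus)
    moreover have "- s \<in> R" using h subR by (simp add: subspace_neg)
    ultimately show ?thesis using h unfolding V_def by blast
  qed
  have C0_add: "C0 (v + v') = C0 v + C0 v'" if hv: "v \<in> V" "v' \<in> V" for v v'
  proof -
    obtain r s where h: "r \<in> R" "s \<in> R" "v = r + scaleC \<i> s" using Vdec[OF hv(1)] by blast
    obtain r' s' where h': "r' \<in> R" "s' \<in> R" "v' = r' + scaleC \<i> s'" using Vdec[OF hv(2)] by blast
    have "v + v' = (r + r') + scaleC \<i> (s + s')" using h h' by (simp add: scaleC_i_add algebra_simps)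
    moreover have "r + r' \<in> R" "s + s' \<in> R" using h h' subR by (simp_all add: subspace_add)
    ultimately have "C0 (v + v') = (r + r') - scaleC \<i> (s + s')" using C0_eq by simp
    also have "\<dots> = C0 v + C0 v'" using h h' C0_eq by (simp add: scaleC_i_add algebra_simps)
    finally show ?thesis .
  qed
  have C0_diff: "C0 (v - v') = C0 v - C0 v'" if hv: "v \<in> V" "v' \<in> V" for v v'
  proof -
    obtain r s where h: "r \<in> R" "s \<in> R" "v = r + scaleC \<i> s" using Vdec[OF hv(1)] by blast
    obtain r' s' where h': "r' \<in> R" "s' \<in> R" "v' = r' + scaleC \<i> s'" using Vdec[OF hv(2)] by blast
    have "v - v' = (r - r') + scaleC \<i> (s - s')" using h h' by (simp add: scaleC_i_diff algebra_simps)
    moreover have "r - r' \<in> R" "s - s' \<in> R" using h h' subR by (simp_all add: subspace_diff)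
    ultimately have "C0 (v - v') = (r - r') - scaleC \<i> (s - s')" using C0_eq by simp
    also have "\<dots> = C0 v - C0 v'" using h h' C0_eq by (simp add: scaleC_i_diff algebra_simps)
    finally show ?thesis .
  qed
  have C0_scale: "scaleC c v \<in> V \<and> C0 (scaleC c v) = scaleC (cnj c) (C0 v)" if hv: "v \<in> V" for c v
  proof -
    obtain r s where h: "r \<in> R" "s \<in> R" "v = r + scaleC \<i> s" using Vdec[OF hv] by blast
    define a where "a = Re c"
    define b where "b = Im c"
    define p where "p = a *\<^sub>R r - b *\<^sub>R s"
    define q where "q = a *\<^sub>R s + b *\<^sub>R r"
    have pq: "p \<in> R" "q \<in> R" unfolding p_def q_def using h subR
      by (simp_all add: subspace_diff subspace_add subspace_scale)
    have "scaleC c v = a *\<^sub>R v + b *\<^sub>R scaleC \<i> v" unfolding a_def b_def by (rule scaleC_decomp)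
    also have "\<dots> = p + scaleC \<i> q" unfolding h(3) p_def q_def
      by (simp add: scaleC_i_add scaleC_i_scaleR scaleC_ii algebra_simps)
    finally have cv: "scaleC c v = p + scaleC \<i> q" .
    have "scaleC (cnj c) (C0 v) = scaleC (cnj c) (r - scaleC \<i> s)" using h C0_eq by simp
    also have "\<dots> = Re (cnj c) *\<^sub>R (r - scaleC \<i> s) + Im (cnj c) *\<^sub>R scaleC \<i> (r - scaleC \<i> s)"
      by (rule scaleC_decomp)
    also have "\<dots> = p - scaleC \<i> q" unfolding p_def q_def a_def b_def
      by (simp add: scaleC_i_add scaleC_i_diff scaleC_i_scaleR scaleC_ii algebra_simps)
    finally have "scaleC (cnj c) (C0 v) = p - scaleC \<i> q" .
    moreover have "C0 (scaleC c v) = p - scaleC \<i> q" unfolding cv by (rule C0_eq[OF pq])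
    moreover have "scaleC c v \<in> V" unfolding cv V_def using pq by blast
    ultimately show ?thesis by simp
  qed
  have C0_inv: "C0 (C0 v) = v" if hv: "v \<in> V" for v
  proof -
    obtain r s where h: "r \<in> R" "s \<in> R" "v = r + scaleC \<i> s" using Vdec[OF hv] by blast
    have ms: "- s \<in> R" using h subR by (simp add: subspace_neg)
    have "C0 v = r + scaleC \<i> (- s)" using h C0_eq by (simp add: scaleC_i_minus)
    then have "C0 (C0 v) = r - scaleC \<i> (- s)" using C0_eq[OF h(1) ms] by simp
    then show ?thesis using h by (simp add: scaleC_i_minus)
  qed
  have C0_B: "B v \<in> V \<and> C0 (B v) = B (C0 v)" if hv: "v \<in> V" for v
  proof -
    obtain r s where h: "r \<in> R" "s \<in> R" "v = r + scaleC \<i> s" using Vdec[OF hv] by blast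
    have Bv: "B v = B r + scaleC \<i> (B s)" using h bB by (simp add: bcl_add bcl_scaleC)
    have BR: "B r \<in> R" "B s \<in> R" using h invR by auto
    have "C0 (B v) = B r - scaleC \<i> (B s)" unfolding Bv by (rule C0_eq[OF BR])
    also have "\<dots> = B (r - scaleC \<i> s)"
      using bB by (simp add: bcl_scaleC diff_conv_add_uminus bcl_add bcl_scaleR[of B "-1", simplified] flip: scaleC_minus_right)
    also have "r - scaleC \<i> s = C0 v" using h C0_eq by simp
    finally show ?thesis unfolding Bv V_def using BR by blast
  qed
  have eV: "e \<in> V" by (rule RV[OF eR])
  have C0e: "C0 e = e" using C0_eq[OF eR subspace_0[OF subR]] by simp
  have uc: "uniformly_continuous_on V C0"
    unfolding uniformly_continuous_on_def
  proof (intro allI impI)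
    fix \<epsilon> :: real assume "\<epsilon> > 0"
    have "dist (C0 x') (C0 x) = dist x' x" if "x \<in> V" "x' \<in> V" for x x'
    proof -
      have "dist (C0 x') (C0 x) = norm (C0 (x' - x))" using that by (simp add: dist_norm C0_diff)
      also have "\<dots> = norm (x' - x)" using that subV by (simp add: C0_norm subspace_diff)
      finally show ?thesis by (simp add: dist_norm)
    qed
    then show "\<exists>\<delta>>0. \<forall>x\<in>V. \<forall>x'\<in>V. dist x' x < \<delta> \<longrightarrow> dist (C0 x') (C0 x) < \<epsilon>"
      using \<open>\<epsilon> > 0\<close> by (intro exI[where x=\<epsilon>]) auto
  qed
  obtain g where guc: "uniformly_continuous_on (closure V) g" and gV: "\<And>x. x \<in> V \<Longrightarrow> C0 x = g x"
  proof (rule uniformly_continuous_on_extension_on_closure[OF uc])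
    fix g assume "uniformly_continuous_on (closure V) g" "\<And>x. x \<in> V \<Longrightarrow> C0 x = g x"
    then show thesis by (rule that)
  qed
  have gc: "continuous_on UNIV g" using uniformly_continuous_imp_continuous[OF guc] dense by simp
  have gcomp: "continuous_on UNIV (\<lambda>x. g (f x))" if "continuous_on UNIV f" for f :: "'a \<Rightarrow> 'a"
    using continuous_on_compose2[OF gc that] by simp
  have Bc: "continuous_on UNIV B" by (rule bcl_cont[OF bB])
  have Bcomp: "continuous_on UNIV (\<lambda>x. B (f x))" if "continuous_on UNIV f" for f :: "'a \<Rightarrow> 'a"
    using continuous_on_compose2[OF Bc that] by simp
  have g_norm: "norm (g x) = norm x" for x
    by (rule dense_eq[OF _ _ dense, of "\<lambda>x. norm (g x)" norm])
       (auto intro!: continuous_intros gc simp: C0_norm gV[symmetric])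
  have g_add1: "g (x + y) = g x + g y" if "y \<in> V" for x y
    by (rule dense_eq[OF _ _ dense, of "\<lambda>x. g (x + y)" "\<lambda>x. g x + g y"])
       (auto intro!: continuous_intros gc gcomp simp: that C0_add gV[symmetric] subspace_add[OF subV])
  have g_add: "g (x + y) = g x + g y" for x y
    by (rule dense_eq[OF _ _ dense, of "\<lambda>y. g (x + y)" "\<lambda>y. g x + g y"])
       (auto intro!: continuous_intros gc gcomp simp: g_add1)
  have g_scale: "g (scaleC c x) = scaleC (cnj c) (g x)" for c x
    by (rule dense_eq[OF _ _ dense, of "\<lambda>x. g (scaleC c x)" "\<lambda>x. scaleC (cnj c) (g x)"])
       (auto intro!: continuous_intros gc gcomp simp: C0_scale gV[symmetric])
  have g_inv: "g (g x) = x" for x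
    by (rule dense_eq[OF _ _ dense, of "\<lambda>x. g (g x)" "\<lambda>x. x"])
       (auto intro!: continuous_intros gc gcomp simp: C0V C0_inv gV[symmetric])
  have g_B: "g (B x) = B (g x)" for x
    by (rule dense_eq[OF _ _ dense, of "\<lambda>x. g (B x)" "\<lambda>x. B (g x)"])
       (auto intro!: continuous_intros gc gcomp Bcomp Bc simp: C0_B gV[symmetric])
  have "conjugation g" unfolding conjugation_def using g_add g_scale g_norm g_inv by blast
  moreover have "g e = e" using gV[OF eV] C0e by simp
  ultimately show ?thesis using g_B by blast
qed


lemma rank_one:
  assumes "crank A = 1"
  shows "\<exists>e. \<forall>x. \<exists>c. A x = scaleC c (e::'b::cvector_space)"
proof -
  let ?P = "\<lambda>n. \<exists>F. finite F \<and> card F = n \<and> cspan F = range A"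
  have ex: "\<exists>F. finite F \<and> cspan F = range A"
  proof (rule ccontr)
    assume "\<not> (\<exists>F. finite F \<and> cspan F = range A)"
    then have "crank A = 0" unfolding crank_def by (simp only: if_False)
    then show False using assms by simp
  qed
  then have L: "(LEAST n. ?P n) = 1" using assms unfolding crank_def by simp
  have "\<exists>n. ?P n" using ex by blast
  then have "?P (LEAST n. ?P n)" by (rule LeastI_ex)
  then obtain F where F: "finite F" "card F = 1" "cspan F = range A" unfolding L by blast
  from F(2) obtain e where Fe: "F = {e}" by (rule card_1_singletonE)
  have "\<exists>c. A x = scaleC c e" for x
  proof -
    have "A x \<in> cspan {e}" using F Fe by simp
    then obtain F' c where F': "A x = (\<Sum>v\<in>F'. scaleC (c v) v)" "finite F'" "F' \<subseteq> {e}"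
      unfolding cspan_def by blast
    show ?thesis
    proof (cases "F' = {}")
      case True then show ?thesis using F' by (intro exI[where x=0]) simp
    next
      case False then have "F' = {e}" using F'(3) by blast
      then show ?thesis using F' by (intro exI[where x="c e"]) simp
    qed
  qed
  then show ?thesis by blast
qed

lemma conj_zero: "conjugation C \<Longrightarrow> C 0 = (0::'a::cinner_space)"
proof -
  assume c: "conjugation C"
  have "C 0 = C (0 + 0)" by simp
  also have "\<dots> = C 0 + C 0" using c unfolding conjugation_def by blast
  finally show ?thesis by (simp only: add_cancel_right_right)
qed

lemma conj_inner:
  assumes c: "conjugation C"
  shows "cinner (C a) (C b) = cnj (cinner a (b::'a::cinner_space))"
proof -
  have add: "C (x + y) = C x + C y" and sc: "C (scaleC k x) = scaleC (cnj k) (C x)" and nm: "norm (C x) = norm x" for x y k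
    using c unfolding conjugation_def by blast+
  have re: "Re (cinner (C x) (C y)) = Re (cinner x y)" for x y
  proof -
    have "(norm (C x + C y))\<^sup>2 = (norm (x + y))\<^sup>2" using add nm by metis
    then show ?thesis using nm by (simp add: norm_add_sq)
  qed
  have "Re (cinner (C a) (C (scaleC \<i> b))) = Re (cinner a (scaleC \<i> b))" by (rule re)
  then have im: "Im (cinner (C a) (C b)) = - Im (cinner a b)"
    by (simp add: sc cinner_scaleC_right)
  show ?thesis using re[of a b] im by (simp add: complex_eq_iff)
qed

lemma rank_one_commute:
  fixes A C :: "'a::cinner_space \<Rightarrow> 'a"
  assumes sA: "selfadjoint A" and rep: "\<And>x. \<exists>c. A x = scaleC c e"
    and c: "conjugation C" and Ce: "C e = e"
  shows "C (A (C x)) = A x"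
proof (cases "e = 0")
  case True
  have "A y = 0" for y using rep[of y] True by auto
  then show ?thesis using conj_zero[OF c] by simp
next
  case False
  define n where "n = cinner e e"
  have n0: "n \<noteq> 0" using False unfolding n_def by (simp add: cinner_self_eq_0)
  have nr: "cnj n = n" unfolding n_def by (simp add: cinner_self_norm)
  have adj: "cinner (A u) v = cinner u (A v)" for u v using sA unfolding selfadjoint_def is_adjoint_def by blast
  obtain k where k: "A e = scaleC k e" using rep by blast
  have "cinner e (A e) = k * n" unfolding n_def k by (simp add: cinner_scaleC_right)
  moreover have "cinner (A e) e = cnj k * n" unfolding n_def k by (simp add: cinner_scaleC_left)
  ultimately have kr: "cnj k = k" using adj[of e e] n0 by simp
  define \<kappa> where "\<kappa> = cnj k / n"
  have kappa_r: "cnj \<kappa> = \<kappa>" unfolding \<kappa>_def using kr nr by simp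
  have Af: "A y = scaleC (\<kappa> * cinner e y) e" for y
  proof -
    obtain cy where cy: "A y = scaleC cy e" using rep by blast
    have "cinner e (A y) = cy * n" unfolding n_def cy by (simp add: cinner_scaleC_right)
    moreover have "cinner e (A y) = cnj k * cinner e y" using adj[of e y] k by (simp add: cinner_scaleC_left)
    ultimately have "cy = \<kappa> * cinner e y" unfolding \<kappa>_def using n0 by (simp add: field_simps)
    then show ?thesis using cy by simp
  qed
  have sc: "C (scaleC k' y) = scaleC (cnj k') (C y)" for k' y using c unfolding conjugation_def by blast
  have inv: "C (C y) = y" for y using c unfolding conjugation_def by blast
  have ecx: "cinner e (C x) = cnj (cinner e x)"
  proof -
    have "cinner e (C x) = cinner (C e) (C x)" using Ce by simp
    also have "\<dots> = cnj (cinner e x)" by (rule conj_inner[OF c])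
    finally show ?thesis .
  qed
  have "C (A (C x)) = scaleC (cnj (\<kappa> * cinner e (C x))) (C e)" unfolding Af by (rule sc)
  also have "\<dots> = scaleC (\<kappa> * cinner e x) e" using Ce ecx kappa_r by simp
  also have "\<dots> = A x" by (simp add: Af)
  finally show ?thesis .
qed

theorem corollary4p4:
  fixes T A B :: "'a::chilbert_space \<Rightarrow> 'a"
  assumes "separable_space TYPE('a)"
    and "bounded_clinear T"
    and "bounded_clinear A" and "selfadjoint A"
    and "bounded_clinear B" and "selfadjoint B"
    and "\<forall>x. T x = A x + scaleC \<i> (B x)"
    and "crank A = 1 \<or> crank B = 1"
  shows "complex_symmetric T"
proof -
  have "\<exists>C. conjugation C \<and> (\<forall>x. C (A (C x)) = A x) \<and> (\<forall>x. C (B (C x)) = B x)"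
  proof (cases "crank A = 1")
    case True
    obtain e where e: "\<forall>x. \<exists>c. A x = scaleC c e" using rank_one[OF True] by blast
    obtain C where C: "conjugation C" "\<forall>x. C (B x) = B (C x)" "C e = e"
      using exists_conj[OF assms(5,6)] by blast
    have "C (B (C x)) = B x" for x using C(1,2) unfolding conjugation_def by simp
    moreover have "C (A (C x)) = A x" for x
      by (rule rank_one_commute[OF assms(4) _ C(1,3)]) (use e in blast)
    ultimately show ?thesis using C(1) by blast
  next
    case False
    then have Bt: "crank B = 1" using assms(8) by blast
    obtain e where e: "\<forall>x. \<exists>c. B x = scaleC c e" using rank_one[OF Bt] by blast
    obtain C where C: "conjugation C" "\<forall>x. C (A x) = A (C x)" "C e = e"
      using exists_conj[OF assms(3,4)] by blast
    have "C (A (C x)) = A x" for x using C(1,2) unfolding conjugation_def by simp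
    moreover have "C (B (C x)) = B x" for x
      by (rule rank_one_commute[OF assms(6) _ C(1,3)]) (use e in blast)
    ultimately show ?thesis using C(1) by blast
  qed
  then obtain C where C: "conjugation C" "\<And>x. C (A (C x)) = A x" "\<And>x. C (B (C x)) = B x" by blast
  define S where "S x = A x + scaleC (- \<i>) (B x)" for x
  have adjA: "cinner (A u) v = cinner u (A v)" for u v using assms(4) unfolding selfadjoint_def is_adjoint_def by blast
  have adjB: "cinner (B u) v = cinner u (B v)" for u v using assms(6) unfolding selfadjoint_def is_adjoint_def by blast
  have "is_adjoint T S" unfolding is_adjoint_def
  proof (intro allI)
    fix x y
    have "cinner (T x) y = cinner (A x) y + cnj \<i> * cinner (B x) y"
      using assms(7) by (simp add: cinner_add_left cinner_scaleC_left)
    also have "\<dots> = cinner x (A y) + (- \<i>) * cinner x (B y)" by (simp add: adjA adjB)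
    also have "\<dots> = cinner x (S y)" unfolding S_def by (simp add: cinner_add_right cinner_scaleC_right)
    finally show "cinner (T x) y = cinner x (S y)" .
  qed
  moreover have "T x = C (S (C x))" for x
  proof -
    have add: "C (u + v) = C u + C v" and sc: "C (scaleC k u) = scaleC (cnj k) (C u)" for u v k
      using C(1) unfolding conjugation_def by blast+
    have "C (S (C x)) = C (A (C x)) + scaleC (cnj (- \<i>)) (C (B (C x)))" unfolding S_def by (simp add: add sc)
    also have "\<dots> = A x + scaleC \<i> (B x)" using C(2,3) by simp
    finally show ?thesis using assms(7) by simp
  qed
  ultimately show ?thesis unfolding complex_symmetric_def using C(1) by blast
qed

end
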